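(* Let $m\ge 1$, let $\mathbf b\in\mathbb R^{2m}$ be a fixed unit vector and let $t_0\in\mathbb N_0$. For $X\in\mathbb M_{2m}(\mathbb R)$ define $$\alpha_X:\mathbb S_{2m}(\mathbb R)\to\mathbb R^{m(2m+1)},\qquad \alpha_X(\Gamma):=\Big(\mathbf b^T X^i\,\Gamma\,(X^T)^i\,\mathbf b\Big)_{i=t_0}^{t_0+m(2m+1)-1},$$ $$\beta_X:\mathbb R^{2m}\to\mathbb R^{2m},\qquad \beta_X(\mathbf d):=\Big(\mathbf b^T X^i\,\mathbf d\Big)_{i=t_0}^{t_0+2m-1}.$$ Then there is a Lebesgue-null set $\mathcal N_{\mathbf b}\subset\mathbb M_{2m}(\mathbb R)\cong\mathbb R^{4m^2}$ (depending on $\mathbf b$) such that for every $X\notin\mathcal N_{\mathbf b}$ both $\alpha_X$ and $\beta_X$ are injective. Consequently, for such $X$, the pair $(\Gamma,\mathbf d)$ is uniquely determined by the values $\mathbf b^T X^i\Gamma (X^T)^i\mathbf b$ and $\mathbf b^TX^i\mathbf d$ for the $m(2m+1)$ consecutive times $i=t_0,\dots,t_0+m(2m+1)-1$.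
   Context: $\mathbb M_n(\mathbb R)$ denotes real $n\times n$ matrices and $\mathbb S_n(\mathbb R)$ real symmetric $n\times n$ matrices. Physically, $\Gamma$ is the covariance matrix and $\mathbf d$ the displacement vector of an $m$-mode Gaussian state, $\mathbf b^T\mathbf R$ is a fixed homodyne measurement whose mean and variance after $i$ applications of a Gaussian channel with matrix $X$ are (up to known additive terms) $\mathbf b^TX^i\mathbf d$ and $\mathbf b^TX^i\Gamma(X^T)^i\mathbf b$. *)

theory Defs
  imports "HOL-Analysis.Analysis"
begin

primrec matpow :: "real^'n^'n \<Rightarrow> nat \<Rightarrow> real^'n^'n" where
  "matpow X 0 = mat 1"
| "matpow X (Suc i) = X ** matpow X i"

text \<open>alpha_X(Gamma) = (b^T X^i Gamma (X^T)^i b) for i = t0 .. t0 + m(2m+1) - 1,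
  where 2m = CARD('n).\<close>
definition alpha_map :: "real^'n \<Rightarrow> nat \<Rightarrow> real^'n^'n \<Rightarrow> real^'n^'n \<Rightarrow> (nat \<Rightarrow> real)" where
  "alpha_map b t0 X G =
     (\<lambda>i\<in>{t0..<t0 + (CARD('n) div 2) * (CARD('n) + 1)}.
        b \<bullet> ((matpow X i ** G ** matpow (transpose X) i) *v b))"

definition beta_map :: "real^'n \<Rightarrow> nat \<Rightarrow> real^'n^'n \<Rightarrow> real^'n \<Rightarrow> (nat \<Rightarrow> real)" where
  "beta_map b t0 X d = (\<lambda>i\<in>{t0..<t0 + CARD('n)}. b \<bullet> (matpow X i *v d))"

definition sym_mats :: "(real^'n^'n) set" where
  "sym_mats = {G. transpose G = G}"

end

theory Submission
  imports Defs "HOL-Computational_Algebra.Polynomial"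
begin

inductive polyfun :: "('a::euclidean_space \<Rightarrow> real) \<Rightarrow> bool" where
  pf_const: "polyfun (\<lambda>x. c)"
| pf_lin: "bounded_linear l \<Longrightarrow> polyfun l"
| pf_add: "polyfun f \<Longrightarrow> polyfun g \<Longrightarrow> polyfun (\<lambda>x. f x + g x)"
| pf_mult: "polyfun f \<Longrightarrow> polyfun g \<Longrightarrow> polyfun (\<lambda>x. f x * g x)"

lemma pf_sum: "finite A \<Longrightarrow> (\<And>i. i \<in> A \<Longrightarrow> polyfun (f i)) \<Longrightarrow> polyfun (\<lambda>x. \<Sum>i\<in>A. f i x)"
  by (induction A rule: finite_induct) (auto intro: polyfun.intros)

lemma pf_prod: "finite A \<Longrightarrow> (\<And>i. i \<in> A \<Longrightarrow> polyfun (f i)) \<Longrightarrow> polyfun (\<lambda>x. \<Prod>i\<in>A. f i x)"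
  by (induction A rule: finite_induct) (auto intro: polyfun.intros)

lemma pf_diff: "polyfun f \<Longrightarrow> polyfun g \<Longrightarrow> polyfun (\<lambda>x. f x - g x)"
proof -
  assume "polyfun f" "polyfun g"
  then have "polyfun (\<lambda>x. f x + (-1) * g x)" by (intro pf_add pf_mult pf_const)
  then show ?thesis by simp
qed

lemma pf_cont: "polyfun f \<Longrightarrow> continuous_on UNIV f"
  by (induction rule: polyfun.induct)
     (auto intro: continuous_intros linear_continuous_on)

lemma pf_line: "polyfun f \<Longrightarrow> \<exists>D. \<forall>u w. \<exists>q. degree q \<le> D \<and> (\<forall>s. f (u + s *\<^sub>R w) = poly q s)"
proof (induction rule: polyfun.induct)
  case (pf_const c)
  show ?case by (rule exI[of _ 0], intro allI exI[of _ "[:c:]"]) auto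
next
  case (pf_lin l)
  show ?case
  proof (rule exI[of _ 1], intro allI)
    fix u w
    show "\<exists>q. degree q \<le> 1 \<and> (\<forall>s. l (u + s *\<^sub>R w) = poly q s)"
      by (rule exI[of _ "[:l u, l w:]"])
         (auto simp: linear_add[OF bounded_linear.linear[OF pf_lin]] linear_scale[OF bounded_linear.linear[OF pf_lin]] degree_pCons_le)
  qed
next
  case (pf_add f g)
  then obtain D1 D2 where D1: "\<forall>u w. \<exists>q. degree q \<le> D1 \<and> (\<forall>s. f (u + s *\<^sub>R w) = poly q s)"
    and D2: "\<forall>u w. \<exists>q. degree q \<le> D2 \<and> (\<forall>s. g (u + s *\<^sub>R w) = poly q s)" by blast
  show ?case
  proof (rule exI[of _ "max D1 D2"], intro allI)
    fix u w
    obtain q1 q2 where "degree q1 \<le> D1" "\<forall>s. f (u + s *\<^sub>R w) = poly q1 s"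
      "degree q2 \<le> D2" "\<forall>s. g (u + s *\<^sub>R w) = poly q2 s" using D1 D2 by blast
    then show "\<exists>q. degree q \<le> max D1 D2 \<and> (\<forall>s. f (u + s *\<^sub>R w) + g (u + s *\<^sub>R w) = poly q s)"
      by (intro exI[of _ "q1 + q2"]) (use degree_add_le[of q1 "max D1 D2" q2] in auto)
  qed
next
  case (pf_mult f g)
  then obtain D1 D2 where D1: "\<forall>u w. \<exists>q. degree q \<le> D1 \<and> (\<forall>s. f (u + s *\<^sub>R w) = poly q s)"
    and D2: "\<forall>u w. \<exists>q. degree q \<le> D2 \<and> (\<forall>s. g (u + s *\<^sub>R w) = poly q s)" by blast
  show ?case
  proof (rule exI[of _ "D1 + D2"], intro allI)
    fix u w
    obtain q1 q2 where "degree q1 \<le> D1" "\<forall>s. f (u + s *\<^sub>R w) = poly q1 s"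
      "degree q2 \<le> D2" "\<forall>s. g (u + s *\<^sub>R w) = poly q2 s" using D1 D2 by blast
    then show "\<exists>q. degree q \<le> D1 + D2 \<and> (\<forall>s. f (u + s *\<^sub>R w) * g (u + s *\<^sub>R w) = poly q s)"
      by (intro exI[of _ "q1 * q2"]) (auto intro: order.trans[OF degree_mult_le] add_mono)
  qed
qed

lemma pf_null_ball:
  fixes f :: "'a::euclidean_space \<Rightarrow> real"
  assumes pf: "polyfun f" and fa: "f a \<noteq> 0"
  shows "{x. f x = 0} \<inter> cball a R \<in> null_sets lebesgue"
proof -
  obtain D where D: "\<forall>u w. \<exists>q. degree q \<le> D \<and> (\<forall>s. f (u + s *\<^sub>R w) = poly q s)"
    using pf_line[OF pf] by blast
  have roots: "finite {s. f (a + s *\<^sub>R (x - a)) = 0} \<and> card {s. f (a + s *\<^sub>R (x - a)) = 0} \<le> D" for x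
  proof -
    obtain q where q: "degree q \<le> D" "\<forall>s. f (a + s *\<^sub>R (x - a)) = poly q s" using D by blast
    have "poly q 0 \<noteq> 0" using q(2)[rule_format, of 0] fa by simp
    then have "q \<noteq> 0" by auto
    moreover have "{s. f (a + s *\<^sub>R (x - a)) = 0} = {s. poly q s = 0}" using q(2) by auto
    ultimately show ?thesis using poly_roots_finite card_poly_roots_bound q(1) by fastforce
  qed
  define Z where "Z = {x. f x = 0}"
  have clZ: "closed Z" unfolding Z_def
    using continuous_closed_preimage_constant[OF pf_cont[OF pf] closed_UNIV] by simp
  define A where "A = Z \<inter> cball a R"
  have cA: "compact A" unfolding A_def using clZ by (simp add: closed_Int_compact)
  define h where "h s x = s *\<^sub>R x + (1 - s) *\<^sub>R a" for s :: real and x :: 'a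
  have ch: "compact (h s ` A)" for s
    unfolding h_def by (intro compact_continuous_image cA continuous_intros)
  have mB: "h s ` A \<in> sets lebesgue" for s using lmeasurable_compact[OF ch] by auto
  have mA: "A \<in> sets lebesgue" using lmeasurable_compact[OF cA] by auto
  define C where "C = cball a (2 * R)"
  have mC: "C \<in> lmeasurable" unfolding C_def by (simp add: lmeasurable_cball)
  have hC: "h s ` A \<subseteq> C" if "1 \<le> s" "s \<le> 2" for s
  proof
    fix y assume "y \<in> h s ` A"
    then obtain x where x: "x \<in> A" "y = h s x" by auto
    have "dist a y = norm (s *\<^sub>R (a - x))" unfolding x h_def dist_norm
      by (simp add: algebra_simps)
    also have "\<dots> = s * dist a x" using that by (simp add: dist_norm)
    also have "\<dots> \<le> 2 * R"
    proof -
      have "dist a x \<le> R" using x(1) unfolding A_def by auto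
      then show ?thesis using that mult_mono[of s 2 "dist a x" R] by auto
    qed
    finally show "y \<in> C" unfolding C_def by auto
  qed
  have emh: "emeasure lebesgue (h s ` A) = ennreal (s ^ DIM('a)) * emeasure lebesgue A" if "1 \<le> s" for s
  proof -
    have "emeasure lebesgue (h s ` A) = ennreal (\<bar>s\<bar> ^ DIM('a)) * emeasure lebesgue A"
      unfolding h_def[abs_def] by (rule emeasure_lebesgue_affine)
    then show ?thesis using that by simp
  qed
  have "measure lebesgue A \<le> 0"
  proof (rule ccontr)
    assume "\<not> measure lebesgue A \<le> 0"
    then have pos: "measure lebesgue A > 0" by simp
    obtain M :: nat where M: "real M > real D * measure lebesgue C / measure lebesgue A"
      using reals_Archimedean2 by blast
    then have M0: "M > 0"
      by (metis divide_nonneg_nonneg measure_nonneg mult_nonneg_nonneg not_gr0 not_le of_nat_0 of_nat_0_le_iff)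
    define s where "s k = 1 + real k / real M" for k
    have s1: "1 \<le> s k" for k unfolding s_def by simp
    have s2: "s k \<le> 2" if "k < M" for k unfolding s_def using that M0 by (simp add: field_simps)
    have sinj: "inj_on (\<lambda>k. 1 / s k) {..<M}"
      unfolding s_def inj_on_def using M0 by (auto simp: field_simps)
    have "of_nat M * emeasure lebesgue A = (\<Sum>k<M. emeasure lebesgue A)" by simp
    also have "\<dots> \<le> (\<Sum>k<M. emeasure lebesgue (h (s k) ` A))"
    proof (rule sum_mono)
      fix k
      have "1 \<le> s k ^ DIM('a)" using s1[of k] by (simp add: one_le_power)
      then have "ennreal 1 \<le> ennreal (s k ^ DIM('a))" by (rule ennreal_leI)
      then have "1 * emeasure lebesgue A \<le> ennreal (s k ^ DIM('a)) * emeasure lebesgue A"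
        by (intro mult_right_mono) auto
      then have "emeasure lebesgue A \<le> ennreal (s k ^ DIM('a)) * emeasure lebesgue A" by simp
      then show "emeasure lebesgue A \<le> emeasure lebesgue (h (s k) ` A)" using emh[OF s1] by simp
    qed
    also have "\<dots> = (\<integral>\<^sup>+x. (\<Sum>k<M. indicator (h (s k) ` A) x) \<partial>lebesgue)"
      by (subst nn_integral_sum) (auto intro: borel_measurable_indicator mB simp: nn_integral_indicator[OF mB])
    also have "\<dots> \<le> (\<integral>\<^sup>+x. of_nat D * indicator C x \<partial>lebesgue)"
    proof (rule nn_integral_mono)
      fix x :: 'a
      have eq: "(\<Sum>k<M. indicator (h (s k) ` A) x :: ennreal) = of_nat (card {k\<in>{..<M}. x \<in> h (s k) ` A})"
        by (simp add: indicator_def sum.If_cases Int_def)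
      show "(\<Sum>k<M. indicator (h (s k) ` A) x :: ennreal) \<le> of_nat D * indicator C x"
      proof (cases "\<exists>k<M. x \<in> h (s k) ` A")
        case False
        then have "(\<Sum>k<M. indicator (h (s k) ` A) x :: ennreal) = 0" by (auto simp: indicator_def)
        then show ?thesis by simp
      next
        case True
        then have xC: "x \<in> C" using hC s1 s2 by blast
        have xa: "x \<noteq> a"
        proof
          assume "x = a"
          with True obtain k y where "y \<in> A" "a = h (s k) y" by auto
          then have "s k *\<^sub>R (y - a) = 0" unfolding h_def by (auto simp: algebra_simps)
          then have "y = a" using s1[of k] by simp
          then show False using \<open>y \<in> A\<close> fa unfolding A_def Z_def by simp
        qed
        have sub: "(\<lambda>k. 1 / s k) ` {k\<in>{..<M}. x \<in> h (s k) ` A} \<subseteq> {t. f (a + t *\<^sub>R (x - a)) = 0}"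
        proof
          fix t assume "t \<in> (\<lambda>k. 1 / s k) ` {k\<in>{..<M}. x \<in> h (s k) ` A}"
          then obtain k y where "k < M" "y \<in> A" "x = h (s k) y" "t = 1 / s k" by auto
          have sk: "s k \<noteq> 0" using s1[of k] by simp
          have "a + (1 / s k) *\<^sub>R (h (s k) y - a) = y"
            unfolding h_def using sk by (simp add: algebra_simps)
          then show "t \<in> {t. f (a + t *\<^sub>R (x - a)) = 0}" using \<open>y \<in> A\<close> \<open>x = h (s k) y\<close> \<open>t = 1 / s k\<close>
            unfolding A_def Z_def by simp
        qed
        have "card {k\<in>{..<M}. x \<in> h (s k) ` A} \<le> card {t. f (a + t *\<^sub>R (x - a)) = 0}"
          by (rule card_inj_on_le[OF inj_on_subset[OF sinj] sub]) (use roots in auto)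
        also have "\<dots> \<le> D" using roots by blast
        finally show ?thesis unfolding eq using xC by simp
      qed
    qed
    also have "\<dots> = of_nat D * emeasure lebesgue C"
      using mC by (intro nn_integral_cmult_indicator) auto
    finally have le: "of_nat M * emeasure lebesgue A \<le> of_nat D * emeasure lebesgue C" .
    have "emeasure lebesgue A = ennreal (measure lebesgue A)"
      using lmeasurable_compact[OF cA] by (simp add: emeasure_eq_measure2)
    moreover have "emeasure lebesgue C = ennreal (measure lebesgue C)"
      using mC by (simp add: emeasure_eq_measure2)
    ultimately have "ennreal (real M * measure lebesgue A) \<le> ennreal (real D * measure lebesgue C)"
      using le by (simp add: ennreal_mult ennreal_of_nat_eq_real_of_nat)
    then have "real M * measure lebesgue A \<le> real D * measure lebesgue C"
      by (simp add: ennreal_le_iff)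
    then show False using M pos by (simp add: field_simps)
  qed
  then have "measure lebesgue A = 0" using measure_nonneg antisym by blast
  then show ?thesis unfolding A_def[symmetric] Z_def[symmetric]
    using lmeasurable_compact[OF cA] by (simp add: null_sets_def emeasure_eq_measure2)
qed

lemma pf_null:
  fixes f :: "'a::euclidean_space \<Rightarrow> real"
  assumes pf: "polyfun f" and fa: "f a \<noteq> 0"
  shows "{x. f x = 0} \<in> null_sets lebesgue"
proof -
  have "{x. f x = 0} = (\<Union>n::nat. {x. f x = 0} \<inter> cball a (real n))"
  proof safe
    fix x assume "f x = 0"
    obtain n :: nat where "dist a x \<le> real n" using real_arch_simple by blast
    then show "x \<in> (\<Union>n::nat. {x. f x = 0} \<inter> cball a (real n))" using \<open>f x = 0\<close> by auto
  qed
  also have "\<dots> \<in> null_sets lebesgue" by (rule null_sets_UN) (rule pf_null_ball[OF pf fa])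
  finally show ?thesis .
qed

lemma matpow_Suc': "matpow X (Suc i) = matpow X i ** X"
  by (induction i) (auto simp: matrix_mul_assoc)

lemma matpow_transpose: "matpow (transpose X) i = transpose (matpow X i)"
proof (induction i)
  case 0 then show ?case by (simp add: transpose_mat)
next
  case (Suc i)
  have "transpose (matpow X (Suc i)) = transpose (matpow X i ** X)" by (simp only: matpow_Suc')
  also have "\<dots> = transpose X ** transpose (matpow X i)" by (simp add: matrix_transpose_mul)
  also have "\<dots> = matpow (transpose X) (Suc i)" using Suc by simp
  finally show ?case by simp
qed

definition mpf :: "(real^'n^'n \<Rightarrow> real^'m^'k) \<Rightarrow> bool" where
  "mpf M \<longleftrightarrow> (\<forall>i j. polyfun (\<lambda>X. M X $ i $ j))"

lemma bl_entry: "bounded_linear (\<lambda>X::real^'n^'n. X $ i $ j)"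
  using bounded_linear_compose[OF bounded_linear_vec_nth[of j] bounded_linear_vec_nth[of i]] by simp

lemma mpf_id: "mpf (\<lambda>X. X)"
  unfolding mpf_def by (auto intro: pf_lin bl_entry)

lemma mpf_transpose: "mpf (\<lambda>X. transpose X)"
  unfolding mpf_def transpose_def by (auto intro: pf_lin bl_entry)

lemma mpf_const: "mpf (\<lambda>X. C)"
  unfolding mpf_def by (auto intro: pf_const)

lemma mpf_mult: "mpf M \<Longrightarrow> mpf N \<Longrightarrow> mpf (\<lambda>X. M X ** N X)"
  unfolding mpf_def matrix_matrix_mult_def by (auto intro!: pf_sum pf_mult)

lemma mpf_matpow: "mpf M \<Longrightarrow> mpf (\<lambda>X. matpow (M X) i)"
  by (induction i) (auto intro: mpf_mult mpf_const)

lemma pf_mv: "mpf M \<Longrightarrow> polyfun (\<lambda>X. (M X *v b) $ p)"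
  unfolding mpf_def matrix_vector_mult_def by (auto intro!: pf_sum pf_mult pf_const)

lemma pf_det: "mpf M \<Longrightarrow> polyfun (\<lambda>X. det (M X))"
  unfolding mpf_def det_def by (auto intro!: pf_sum pf_mult pf_prod pf_const)

lemma inner_transpose: "(transpose A *v b) \<bullet> d = b \<bullet> (A *v (d::real^'n))"
  by (metis dot_lmul_matrix transpose_matrix_vector)

lemma quad_expand: "w \<bullet> (G *v w) = (\<Sum>p\<in>UNIV. \<Sum>q\<in>UNIV. w $ p * w $ q * G $ p $ q)"
  by (simp add: inner_vec_def matrix_vector_mult_def sum_distrib_left ac_simps)

lemma alpha_val: "b \<bullet> ((A ** G ** transpose A) *v b) = (transpose A *v b) \<bullet> (G *v (transpose A *v (b::real^'n)))"
  by (simp only: matrix_vector_mul_assoc[symmetric] inner_transpose)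

lemma vdm:
  fixes \<mu> c :: "'p \<Rightarrow> real"
  assumes fin: "finite P" and inj: "inj_on \<mu> P" and nz: "\<forall>p\<in>P. \<mu> p \<noteq> 0"
    and eqs: "\<forall>r<card P. (\<Sum>p\<in>P. c p * \<mu> p ^ (t0 + r)) = 0"
  shows "\<forall>p\<in>P. c p = 0"
proof
  fix p0 assume p0: "p0 \<in> P"
  define q where "q = (\<Prod>p\<in>P - {p0}. [:- \<mu> p, 1:])"
  have dq: "degree q \<le> card (P - {p0})" unfolding q_def
    by (rule order.trans[OF degree_prod_sum_le]) (auto simp: fin)
  have dq2: "degree q < card P" using dq p0 fin
    by (metis card_Diff1_less le_less_trans)
  have pq: "poly q x = (\<Prod>p\<in>P - {p0}. x - \<mu> p)" for x unfolding q_def by (simp add: poly_prod)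
  have "0 = (\<Sum>r\<le>degree q. coeff q r * (\<Sum>p\<in>P. c p * \<mu> p ^ (t0 + r)))"
    using eqs dq2 by simp
  also have "\<dots> = (\<Sum>p\<in>P. c p * \<mu> p ^ t0 * (\<Sum>r\<le>degree q. coeff q r * \<mu> p ^ r))"
    by (simp add: sum_distrib_left sum_distrib_right power_add ac_simps sum.swap[of _ "{..degree q}"])
  also have "\<dots> = (\<Sum>p\<in>P. c p * \<mu> p ^ t0 * poly q (\<mu> p))"
    by (simp add: poly_altdef)
  also have "\<dots> = c p0 * \<mu> p0 ^ t0 * poly q (\<mu> p0)"
  proof (rule sum.remove[OF fin p0, THEN trans])
    have "(\<Sum>p\<in>P - {p0}. c p * \<mu> p ^ t0 * poly q (\<mu> p)) = 0"
    proof (rule sum.neutral, rule ballI)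
      fix p assume "p \<in> P - {p0}"
      then have "poly q (\<mu> p) = 0" unfolding pq using fin
        by (auto intro!: prod_zero)
      then show "c p * \<mu> p ^ t0 * poly q (\<mu> p) = 0" by simp
    qed
    then show "c p0 * \<mu> p0 ^ t0 * poly q (\<mu> p0) + (\<Sum>p\<in>P - {p0}. c p * \<mu> p ^ t0 * poly q (\<mu> p)) =
      c p0 * \<mu> p0 ^ t0 * poly q (\<mu> p0)" by simp
  qed
  finally have z: "c p0 * \<mu> p0 ^ t0 * poly q (\<mu> p0) = 0" by simp
  have "poly q (\<mu> p0) \<noteq> 0" unfolding pq using fin inj p0
    by (auto simp: prod_zero_iff inj_on_def)
  moreover have "\<mu> p0 ^ t0 \<noteq> 0" using nz p0 by simp
  ultimately show "c p0 = 0" using z by (metis mult_eq_0_iff)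
qed

lemma card_tri: "2 * card {(a::nat, b). a \<le> b \<and> b < n} = n * (n + 1)"
proof (induction n)
  case 0 then show ?case by simp
next
  case (Suc n)
  have eq: "{(a::nat, b). a \<le> b \<and> b < Suc n} = {(a, b). a \<le> b \<and> b < n} \<union> (\<lambda>a. (a, n)) ` {..n}"
    by auto
  have fin: "finite {(a::nat, b). a \<le> b \<and> b < n}"
    by (rule finite_subset[of _ "{..n} \<times> {..n}"]) auto
  have "card {(a::nat, b). a \<le> b \<and> b < Suc n} = card {(a, b). a \<le> b \<and> b < n} + card ((\<lambda>a. (a, n)) ` {..n})"
    unfolding eq by (rule card_Un_disjoint) (use fin in auto)
  also have "card ((\<lambda>a. (a, n)) ` {..n}) = Suc n" by (subst card_image) (auto simp: inj_on_def)
  finally show ?case using Suc by simp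
qed

lemma sym_sum:
  fixes e :: "'n::finite \<Rightarrow> nat" and f :: "'n \<Rightarrow> 'n \<Rightarrow> real"
  assumes inj: "inj e" and sym: "\<And>p q. f p q = f q p"
  shows "(\<Sum>p\<in>UNIV. \<Sum>q\<in>UNIV. f p q) = (\<Sum>(p,q)\<in>{(p,q). e p \<le> e q}. if p = q then f p q else 2 * f p q)"
proof -
  define P where "P = {(p,q). e p \<le> e q}"
  define Q where "Q = {(p,q). e q < e p}"
  define P' where "P' = {(p,q). e p < e q}"
  have "(\<Sum>p\<in>UNIV. \<Sum>q\<in>UNIV. f p q) = (\<Sum>(p,q)\<in>UNIV. f p q)"
    by (simp add: sum.cartesian_product UNIV_Times_UNIV[symmetric] del: UNIV_Times_UNIV)
  also have "UNIV = P \<union> Q" unfolding P_def Q_def by auto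
  also have "(\<Sum>(p,q)\<in>P \<union> Q. f p q) = (\<Sum>(p,q)\<in>P. f p q) + (\<Sum>(p,q)\<in>Q. f p q)"
    by (rule sum.union_disjoint) (auto simp: P_def Q_def)
  also have "(\<Sum>(p,q)\<in>Q. f p q) = (\<Sum>(p,q)\<in>P'. f p q)"
  proof -
    have "Q = prod.swap ` P'" unfolding Q_def P'_def by auto
    then have "(\<Sum>(p,q)\<in>Q. f p q) = (\<Sum>x\<in>P'. (\<lambda>(p,q). f p q) (prod.swap x))"
      by (simp add: sum.reindex)
    also have "\<dots> = (\<Sum>(p,q)\<in>P'. f p q)" by (intro sum.cong) (auto simp: sym)
    finally show ?thesis .
  qed
  also have "(\<Sum>(p,q)\<in>P'. f p q) = (\<Sum>(p,q)\<in>P. if p = q then 0 else f p q)"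
  proof -
    have "P' = P \<inter> {(p,q). p \<noteq> q}" unfolding P_def P'_def using inj
      by (auto simp: inj_eq order.order_iff_strict)
    then show ?thesis by (simp add: sum.If_cases case_prod_unfold Int_def)
  qed
  also have "(\<Sum>(p,q)\<in>P. f p q) + (\<Sum>(p,q)\<in>P. if p = q then 0 else f p q) =
      (\<Sum>(p,q)\<in>P. if p = q then f p q else 2 * f p q)"
    by (simp add: sum.distrib[symmetric] case_prod_unfold) (intro sum.cong, auto)
  finally show ?thesis unfolding P_def .
qed

definition vv :: "real^'n \<Rightarrow> real^'n^'n \<Rightarrow> nat \<Rightarrow> real^'n" where
  "vv b X i = transpose (matpow X i) *v b"

definition Bmat :: "real^'n \<Rightarrow> nat \<Rightarrow> ('n \<Rightarrow> nat) \<Rightarrow> real^'n^'n \<Rightarrow> real^'n^'n" where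
  "Bmat b t0 e X = (\<chi> j k. vv b X (t0 + e j) $ k)"

definition Amat :: "real^'n \<Rightarrow> nat \<Rightarrow> ('n \<Rightarrow> nat) \<Rightarrow> ('n \<times> 'n \<Rightarrow> nat) \<Rightarrow> real^'n^'n \<Rightarrow> real^('n\<times>'n)^('n\<times>'n)" where
  "Amat b t0 e \<iota> X = (\<chi> jk pq. if e (fst jk) \<le> e (snd jk)
      then vv b X (t0 + \<iota> jk) $ fst pq * vv b X (t0 + \<iota> jk) $ snd pq
      else (if pq = jk then 1 else 0) - (if pq = prod.swap jk then 1 else 0))"

lemma pf_vv: "polyfun (\<lambda>X. vv b X i $ k)"
  unfolding vv_def matpow_transpose[symmetric]
  by (intro pf_mv mpf_matpow mpf_transpose)

lemma mpf_Bmat: "mpf (Bmat b t0 e)"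
  unfolding mpf_def Bmat_def by (simp add: pf_vv)

lemma mpf_Amat: "mpf (Amat b t0 e \<iota>)"
  unfolding mpf_def
proof (intro allI)
  fix jk pq :: "'a \<times> 'a"
  show "polyfun (\<lambda>X. Amat b t0 e \<iota> X $ jk $ pq)"
  proof (cases "e (fst jk) \<le> e (snd jk)")
    case True
    then have "(\<lambda>X. Amat b t0 e \<iota> X $ jk $ pq) = (\<lambda>X. vv b X (t0 + \<iota> jk) $ fst pq * vv b X (t0 + \<iota> jk) $ snd pq)"
      by (simp add: Amat_def)
    then show ?thesis by (simp only:) (intro pf_mult pf_vv)
  next
    case False
    then have "(\<lambda>X. Amat b t0 e \<iota> X $ jk $ pq) = (\<lambda>X. (if pq = jk then 1 else 0) - (if pq = prod.swap jk then 1 else 0))"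
      by (simp add: Amat_def)
    then show ?thesis by (simp only:) (rule pf_const)
  qed
qed

lemma det_inj: "det (A::real^'m^'m) \<noteq> 0 \<Longrightarrow> A *v x = A *v y \<Longrightarrow> x = y"
  using det_nz_iff_inj[of "(*v) A"] by (auto simp: matrix_vector_mul_linear matrix_of_matrix_vector_mul inj_def)

lemma alpha_quad: "b \<bullet> ((matpow X i ** G ** matpow (transpose X) i) *v b) = vv b X i \<bullet> (G *v vv b X i)"
  unfolding vv_def matpow_transpose by (rule alpha_val)

lemma Bmat_mv: "(Bmat b t0 e X *v d) $ j = b \<bullet> (matpow X (t0 + e j) *v d)"
proof -
  have "(Bmat b t0 e X *v d) $ j = vv b X (t0 + e j) \<bullet> d"
    by (simp add: Bmat_def matrix_vector_mult_def inner_vec_def)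
  then show ?thesis unfolding vv_def inner_transpose .
qed

lemma inj_beta:
  assumes d: "det (Bmat b t0 e X) \<noteq> 0" and e: "\<And>j. e j < CARD('n)"
  shows "inj (beta_map b t0 (X::real^'n^'n))"
proof (rule injI)
  fix d1 d2 :: "real^'n"
  assume eq: "beta_map b t0 X d1 = beta_map b t0 X d2"
  have "Bmat b t0 e X *v d1 = Bmat b t0 e X *v d2"
  proof (subst vec_eq_iff, intro allI)
    fix j
    have "t0 + e j \<in> {t0..<t0 + CARD('n)}" using e[of j] by simp
    then have "b \<bullet> (matpow X (t0 + e j) *v d1) = b \<bullet> (matpow X (t0 + e j) *v d2)"
      using fun_cong[OF eq, of "t0 + e j"] unfolding beta_map_def by simp
    then show "(Bmat b t0 e X *v d1) $ j = (Bmat b t0 e X *v d2) $ j" by (simp add: Bmat_mv)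
  qed
  then show "d1 = d2" by (rule det_inj[OF d])
qed

lemma sum_pairs: "(\<Sum>pq\<in>UNIV. F (fst pq) (snd pq)) = (\<Sum>p\<in>UNIV. \<Sum>q\<in>UNIV. (F p q :: real))"
  by (simp add: sum.cartesian_product UNIV_Times_UNIV[symmetric] case_prod_unfold del: UNIV_Times_UNIV)

lemma inj_alpha:
  assumes d: "det (Amat b t0 e \<iota> X) \<noteq> 0"
    and io: "\<And>j k. e j \<le> e k \<Longrightarrow> \<iota> (j, k) < (CARD('n) div 2) * (CARD('n) + 1)"
  shows "inj_on (alpha_map b t0 (X::real^'n^'n)) sym_mats"
proof (rule inj_onI)
  fix G1 G2 :: "real^'n^'n"
  assume s1: "G1 \<in> sym_mats" and s2: "G2 \<in> sym_mats" and eq: "alpha_map b t0 X G1 = alpha_map b t0 X G2"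
  define H where "H = G1 - G2"
  have Hs: "H $ k $ j = H $ j $ k" for j k
  proof -
    have t1: "transpose G1 $ j $ k = G1 $ j $ k" "transpose G2 $ j $ k = G2 $ j $ k"
      using s1 s2 unfolding sym_mats_def by simp_all
    then show ?thesis unfolding H_def by (simp add: transpose_def)
  qed
  define g :: "real^('n\<times>'n)" where "g = (\<chi> pq. H $ fst pq $ snd pq)"
  have "Amat b t0 e \<iota> X *v g = Amat b t0 e \<iota> X *v 0"
  proof (subst vec_eq_iff, intro allI)
    fix jk :: "'n \<times> 'n"
    obtain j k where jk: "jk = (j, k)" by fastforce
    show "(Amat b t0 e \<iota> X *v g) $ jk = (Amat b t0 e \<iota> X *v 0) $ jk"
    proof (cases "e j \<le> e k")
      case True
      define v where "v = vv b X (t0 + \<iota> jk)"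
      have row: "Amat b t0 e \<iota> X $ jk $ pq = v $ fst pq * v $ snd pq" for pq
        using True jk by (simp add: Amat_def v_def)
      have "(Amat b t0 e \<iota> X *v g) $ jk = (\<Sum>pq\<in>UNIV. v $ fst pq * v $ snd pq * H $ fst pq $ snd pq)"
        by (simp add: matrix_vector_mult_def row g_def)
      also have "\<dots> = (\<Sum>p\<in>UNIV. \<Sum>q\<in>UNIV. v $ p * v $ q * H $ p $ q)" by (rule sum_pairs)
      also have "\<dots> = v \<bullet> (H *v v)" by (rule quad_expand[symmetric])
      also have "\<dots> = v \<bullet> (G1 *v v) - v \<bullet> (G2 *v v)"
        by (simp add: H_def matrix_vector_mult_diff_rdistrib inner_diff_right)
      also have "\<dots> = 0"
      proof -
        have "t0 + \<iota> jk \<in> {t0..<t0 + (CARD('n) div 2) * (CARD('n) + 1)}" using io[OF True] jk by simp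
        then show ?thesis using fun_cong[OF eq, of "t0 + \<iota> jk"] unfolding alpha_map_def v_def
          by (simp add: alpha_quad)
      qed
      finally show ?thesis by simp
    next
      case False
      have row: "Amat b t0 e \<iota> X $ jk $ pq = (if pq = jk then 1 else 0) - (if pq = prod.swap jk then 1 else 0)" for pq
        using False jk by (simp add: Amat_def)
      have "(Amat b t0 e \<iota> X *v g) $ jk = (\<Sum>pq\<in>UNIV. ((if pq = jk then 1 else 0) - (if pq = prod.swap jk then 1 else 0)) * g $ pq)"
        by (simp only: matrix_vector_mult_def row vec_lambda_beta)
      also have "\<dots> = (\<Sum>pq\<in>UNIV. (if pq = jk then g $ pq else 0) - (if pq = prod.swap jk then g $ pq else 0))"
        by (intro sum.cong) auto
      also have "\<dots> = g $ jk - g $ prod.swap jk"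
        by (simp add: sum_subtractf)
      also have "\<dots> = 0" by (simp add: g_def jk Hs)
      finally show ?thesis by simp
    qed
  qed
  then have "g = 0" by (simp add: det_inj[OF d])
  then have "H = 0" unfolding g_def by (simp add: vec_eq_iff)
  then show "G1 = G2" unfolding H_def by simp
qed

lemma Bmat_mv': "(Bmat b t0 e X *v d) $ j = vv b X (t0 + e j) \<bullet> d"
  by (simp add: Bmat_def matrix_vector_mult_def inner_vec_def)

lemma Amat_on:
  assumes "e (fst jk) \<le> e (snd jk)"
  shows "(Amat b t0 e \<iota> X *v g) $ jk = vv b X (t0 + \<iota> jk) \<bullet> ((\<chi> p q. g $ (p,q)) *v vv b X (t0 + \<iota> jk))"
proof -
  define v where "v = vv b X (t0 + \<iota> jk)"
  define H where "H = (\<chi> p q. g $ (p,q))"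
  have g: "g $ pq = H $ fst pq $ snd pq" for pq by (simp add: H_def)
  have row: "Amat b t0 e \<iota> X $ jk $ pq = v $ fst pq * v $ snd pq" for pq
    using assms by (simp add: Amat_def v_def)
  have "(Amat b t0 e \<iota> X *v g) $ jk = (\<Sum>pq\<in>UNIV. v $ fst pq * v $ snd pq * H $ fst pq $ snd pq)"
    by (simp only: matrix_vector_mult_def row g vec_lambda_beta)
  also have "\<dots> = (\<Sum>p\<in>UNIV. \<Sum>q\<in>UNIV. v $ p * v $ q * H $ p $ q)" by (rule sum_pairs)
  also have "\<dots> = v \<bullet> (H *v v)" by (rule quad_expand[symmetric])
  finally show ?thesis unfolding v_def H_def .
qed

lemma Amat_off:
  assumes "\<not> e (fst jk) \<le> e (snd jk)"
  shows "(Amat b t0 e \<iota> X *v g) $ jk = g $ jk - g $ prod.swap jk"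
proof -
  have row: "Amat b t0 e \<iota> X $ jk $ pq = (if pq = jk then 1 else 0) - (if pq = prod.swap jk then 1 else 0)" for pq
    using assms by (simp add: Amat_def)
  have "(Amat b t0 e \<iota> X *v g) $ jk = (\<Sum>pq\<in>UNIV. ((if pq = jk then 1 else 0) - (if pq = prod.swap jk then 1 else 0)) * g $ pq)"
    by (simp only: matrix_vector_mult_def row vec_lambda_beta)
  also have "\<dots> = (\<Sum>pq\<in>UNIV. (if pq = jk then g $ pq else 0) - (if pq = prod.swap jk then g $ pq else 0))"
    by (intro sum.cong) auto
  also have "\<dots> = g $ jk - g $ prod.swap jk"
    by (simp add: sum_subtractf)
  finally show ?thesis .
qed

lemma det_ne0: "(\<And>x. A *v x = 0 \<Longrightarrow> x = 0) \<Longrightarrow> det (A::real^'m^'m) \<noteq> 0"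
proof -
  assume h: "\<And>x. A *v x = 0 \<Longrightarrow> x = 0"
  have "inj ((*v) A)"
  proof (rule injI)
    fix x y assume "A *v x = A *v y"
    then have "A *v (x - y) = 0" by (simp add: matrix_vector_mult_diff_distrib)
    then have "x - y = 0" using h by blast
    then show "x = y" by simp
  qed
  then show ?thesis using det_nz_iff_inj[of "(*v) A"]
    by (simp add: matrix_vector_mul_linear matrix_of_matrix_vector_mul)
qed

lemma pow3:
  fixes a b c d :: nat
  assumes "a \<le> b" "c \<le> d" "(3::nat)^a + 3^b = 3^c + 3^d"
  shows "a = c \<and> b = d"
proof -
  have bd: "b = d"
  proof (rule ccontr)
    assume "b \<noteq> d"
    then consider "b < d" | "d < b" by linarith
    then show False
    proof cases
      case 1
      have "(3::nat)^a + 3^b \<le> 2 * 3^b" using assms(1) by (simp add: power_increasing)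
      also have "\<dots> < 3^Suc b" by simp
      also have "\<dots> \<le> 3^d" using 1 by (intro power_increasing) auto
      also have "\<dots> < 3^c + 3^d" by simp
      finally show False using assms(3) by simp
    next
      case 2
      have "(3::nat)^c + 3^d \<le> 2 * 3^d" using assms(2) by (simp add: power_increasing)
      also have "\<dots> < 3^Suc d" by simp
      also have "\<dots> \<le> 3^b" using 2 by (intro power_increasing) auto
      also have "\<dots> < 3^a + 3^b" by simp
      finally show False using assms(3) by simp
    qed
  qed
  then have "(3::nat)^a = 3^c" using assms(3) by simp
  then show ?thesis using bd by simp
qed

lemma Dpow_entry:
  fixes lam :: "'n::finite \<Rightarrow> real"
  shows "matpow (\<chi> p q. if p = q then lam p else 0) i $ p $ q = (if p = q then lam p ^ i else 0)"
proof (induction i arbitrary: p q)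
  case 0 then show ?case by (simp add: mat_def)
next
  case (Suc i)
  let ?D = "(\<chi> p q. if p = q then lam p else 0) :: real^'n^'n"
  have "matpow ?D (Suc i) $ p $ q = (\<Sum>l\<in>UNIV. (if p = l then lam p else 0) * matpow ?D i $ l $ q)"
    by (simp add: matrix_matrix_mult_def)
  also have "\<dots> = (\<Sum>l\<in>UNIV. if l = p then lam p * matpow ?D i $ p $ q else 0)"
    by (intro sum.cong) auto
  also have "\<dots> = lam p * matpow ?D i $ p $ q" by simp
  also have "\<dots> = (if p = q then lam p ^ Suc i else 0)" using Suc by simp
  finally show ?case .
qed

lemma orth_pow:
  fixes S D :: "real^'n^'n"
  assumes StS: "transpose S ** S = mat 1" and SSt: "S ** transpose S = mat 1"
  shows "matpow (S ** D ** transpose S) i = S ** matpow D i ** transpose S"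
proof (induction i)
  case 0 then show ?case using SSt by simp
next
  case (Suc i)
  have StS': "transpose S ** (S ** Z) = Z" for Z :: "real^'n^'n"
    by (simp add: matrix_mul_assoc StS)
  show ?case using Suc by (simp add: matrix_mul_assoc[symmetric] StS')
qed

lemma inner_S: "(S *v w) \<bullet> (y::real^'n) = w \<bullet> (transpose S *v y)"
  using inner_transpose[of "transpose S" w y] by simp

lemma norm_const_vec:
  "norm ((\<chi> j. 1 / sqrt (real CARD('n))) :: real^'n) = 1"
proof -
  have n: "real CARD('n) > 0" by simp
  have "((\<chi> j. 1 / sqrt (real CARD('n))) :: real^'n) \<bullet> (\<chi> j. 1 / sqrt (real CARD('n))) = real CARD('n) * (1 / sqrt (real CARD('n)))^2"
    by (simp add: inner_vec_def power2_eq_square)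
  also have "\<dots> = 1" using n by (simp add: power_divide)
  finally show ?thesis by (simp add: norm_eq_sqrt_inner)
qed

lemma witness:
  fixes b :: "real^'n" and e :: "'n \<Rightarrow> nat" and \<iota> :: "'n \<times> 'n \<Rightarrow> nat"
  assumes nb: "norm b = 1" and e: "bij_betw e UNIV {0..<CARD('n)}"
    and io: "bij_betw \<iota> {(p,q). e p \<le> e q} {0..<card {(p,q). e p \<le> e q}}"
  shows "\<exists>X0. det (Bmat b t0 e X0) \<noteq> 0 \<and> det (Amat b t0 e \<iota> X0) \<noteq> 0"
proof -
  define c where "c = 1 / sqrt (real CARD('n))"
  have c0: "c \<noteq> 0" unfolding c_def by simp
  define u :: "real^'n" where "u = (\<chi> j. c)"
  have nu: "norm u = norm b" using norm_const_vec nb unfolding u_def c_def by simp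
  obtain f where f: "orthogonal_transformation f" "f u = b"
    using orthogonal_transformation_exists[OF nu] by blast
  define S where "S = matrix f"
  have lf: "linear f" and oS: "orthogonal_matrix S"
    using f(1) orthogonal_transformation_matrix S_def by auto
  have Su: "S *v u = b" using f(2) fun_cong[OF matrix_vector_mul(2)[OF lf], of u] S_def by simp
  have StS: "transpose S ** S = mat 1" and SSt: "S ** transpose S = mat 1"
    using oS unfolding orthogonal_matrix_def by auto
  have Stb: "transpose S *v b = u"
    using Su StS by (metis matrix_vector_mul_assoc matrix_vector_mul_lid)
  have einj: "inj e" using e bij_betw_imp_inj_on by blast
  define lam where "lam p = (2::real) ^ (3 ^ e p)" for p
  have lam0: "lam p \<noteq> 0" for p unfolding lam_def by simp
  define D :: "real^'n^'n" where "D = (\<chi> p q. if p = q then lam p else 0)"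
  define Y where "Y = S ** D ** transpose S"
  define X0 where "X0 = transpose Y"
  define w where "w i = matpow D i *v u" for i
  have w: "w i $ p = c * lam p ^ i" for i p
  proof -
    have "w i $ p = (\<Sum>q\<in>UNIV. (if p = q then lam p ^ i else 0) * c)"
      unfolding w_def D_def by (simp add: matrix_vector_mult_def Dpow_entry u_def)
    also have "\<dots> = (\<Sum>q\<in>UNIV. if q = p then lam p ^ i * c else 0)" by (intro sum.cong) auto
    finally show ?thesis by simp
  qed
  have vv0: "vv b X0 i = S *v w i" for i
  proof -
    have "vv b X0 i = matpow Y i *v b" unfolding vv_def X0_def by (simp add: matpow_transpose[symmetric])
    also have "\<dots> = (S ** matpow D i ** transpose S) *v b" unfolding Y_def by (simp add: orth_pow[OF StS SSt])
    also have "\<dots> = S *v w i" unfolding w_def using Stb by (simp add: matrix_vector_mul_assoc[symmetric])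
    finally show ?thesis .
  qed
  have esurj: "\<exists>j. e j = r" if "r < CARD('n)" for r
  proof -
    have "r \<in> range e" using e that unfolding bij_betw_def by simp
    then show ?thesis by (metis imageE)
  qed
  have laminj: "inj lam"
  proof (rule injI)
    fix p q assume "lam p = lam q"
    then have "(3::nat) ^ e p = 3 ^ e q" unfolding lam_def by simp
    then have "e p = e q" by simp
    then show "p = q" using einj by (simp add: inj_eq)
  qed
  have B: "det (Bmat b t0 e X0) \<noteq> 0"
  proof (rule det_ne0)
    fix d assume Bd: "Bmat b t0 e X0 *v d = 0"
    define z where "z = transpose S *v d"
    have "\<forall>r<card (UNIV::'n set). (\<Sum>p\<in>UNIV. (c * z $ p) * lam p ^ (t0 + r)) = 0"
    proof (intro allI impI)
      fix r assume "r < card (UNIV::'n set)"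
      then obtain j where j: "e j = r" using esurj by auto
      have "0 = (Bmat b t0 e X0 *v d) $ j" using Bd by simp
      also have "\<dots> = w (t0 + r) \<bullet> z" unfolding Bmat_mv' vv0 inner_S z_def j ..
      also have "\<dots> = (\<Sum>p\<in>UNIV. (c * z $ p) * lam p ^ (t0 + r))"
        by (simp add: inner_vec_def w ac_simps)
      finally show "(\<Sum>p\<in>UNIV. (c * z $ p) * lam p ^ (t0 + r)) = 0" by simp
    qed
    then have "\<forall>p\<in>UNIV. c * z $ p = 0"
      by (intro vdm[where \<mu> = lam]) (auto simp: lam0 laminj)
    then have "z = 0" using c0 by (simp add: vec_eq_iff)
    then have "S *v z = 0" by simp
    moreover have "S *v (transpose S *v d) = d" by (simp only: matrix_vector_mul_assoc SSt matrix_vector_mul_lid)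
    ultimately show "d = 0" unfolding z_def by simp
  qed
  define P where "P = {(p,q). e p \<le> e q}"
  have A: "det (Amat b t0 e \<iota> X0) \<noteq> 0"
  proof (rule det_ne0)
    fix g assume Ag: "Amat b t0 e \<iota> X0 *v g = 0"
    define G :: "real^'n^'n" where "G = (\<chi> p q. g $ (p,q))"
    have off: "g $ (j,k) = g $ (k,j)" if "\<not> e j \<le> e k" for j k
      using Amat_off[of e "(j,k)" b t0 \<iota> X0 g] that Ag by simp
    have Gs: "G $ p $ q = G $ q $ p" for p q
    proof (cases "e p \<le> e q")
      case True
      show ?thesis
      proof (cases "p = q")
        case False
        then have "e p \<noteq> e q" using einj by (auto simp: inj_eq)
        then have "\<not> e q \<le> e p" using True by simp
        then show ?thesis using off[of q p] by (simp add: G_def)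
      qed simp
    next
      case False then show ?thesis using off[of p q] by (simp add: G_def)
    qed
    define H where "H = transpose S ** G ** S"
    have GT: "transpose G = G" using Gs by (simp add: vec_eq_iff transpose_def)
    have HT: "transpose H = H" unfolding H_def by (simp add: matrix_transpose_mul GT matrix_mul_assoc)
    have Hs: "H $ p $ q = H $ q $ p" for p q
      using arg_cong[OF HT, of "\<lambda>M. M $ q $ p"] by (simp add: transpose_def)
    define coef where "coef pq = (if fst pq = snd pq then 1 else 2) * (c * c * H $ fst pq $ snd pq)" for pq
    define mu where "mu pq = lam (fst pq) * lam (snd pq)" for pq
    have "\<forall>r<card P. (\<Sum>pq\<in>P. coef pq * mu pq ^ (t0 + r)) = 0"
    proof (intro allI impI)
      fix r assume "r < card P"
      then have "r \<in> \<iota> ` P" using io unfolding P_def bij_betw_def by simp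
      then obtain jk where jk: "jk \<in> P" "\<iota> jk = r" by (metis imageE)
      define i where "i = t0 + r"
      have "0 = (Amat b t0 e \<iota> X0 *v g) $ jk" using Ag by simp
      also have "\<dots> = vv b X0 i \<bullet> (G *v vv b X0 i)"
        using Amat_on[of e jk b t0 \<iota> X0 g] jk unfolding P_def G_def i_def by (auto simp: case_prod_unfold)
      also have "\<dots> = w i \<bullet> (H *v w i)"
        unfolding vv0 inner_S H_def by (simp add: matrix_vector_mul_assoc matrix_mul_assoc)
      also have "\<dots> = (\<Sum>p\<in>UNIV. \<Sum>q\<in>UNIV. c * c * (lam p * lam q) ^ i * H $ p $ q)"
        unfolding quad_expand w by (intro sum.cong refl) (simp add: power_mult_distrib ac_simps)
      also have "\<dots> = (\<Sum>(p,q)\<in>P. if p = q then c * c * (lam p * lam q) ^ i * H $ p $ q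
                       else 2 * (c * c * (lam p * lam q) ^ i * H $ p $ q))"
        unfolding P_def by (rule sym_sum[OF einj]) (simp add: Hs ac_simps)
      also have "\<dots> = (\<Sum>pq\<in>P. coef pq * mu pq ^ i)"
        by (intro sum.cong refl) (auto simp: coef_def mu_def)
      finally show "(\<Sum>pq\<in>P. coef pq * mu pq ^ (t0 + r)) = 0" unfolding i_def by simp
    qed
    moreover have "finite P" by simp
    moreover have "inj_on mu P"
    proof (rule inj_onI)
      fix x y assume xP: "x \<in> P" and yP: "y \<in> P" and eq: "mu x = mu y"
      obtain p q p' q' where x: "x = (p,q)" and y: "y = (p',q')" by fastforce
      have "(2::real) ^ (3 ^ e p + 3 ^ e q) = 2 ^ (3 ^ e p' + 3 ^ e q')"
        using eq unfolding mu_def lam_def x y by (simp add: power_add)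
      then have "(3::nat) ^ e p + 3 ^ e q = 3 ^ e p' + 3 ^ e q'" by simp
      then have "e p = e p' \<and> e q = e q'" using xP yP unfolding x y P_def by (intro pow3) auto
      then show "x = y" unfolding x y using einj by (simp add: inj_eq)
    qed
    moreover have "\<forall>pq\<in>P. mu pq \<noteq> 0" by (simp add: mu_def lam0)
    ultimately have "\<forall>pq\<in>P. coef pq = 0" by (intro vdm) auto
    then have HP: "H $ p $ q = 0" if "(p,q) \<in> P" for p q
      using that c0 by (auto simp: coef_def split: if_splits)
    have "H = 0"
    proof (subst vec_eq_iff, intro allI, subst vec_eq_iff, intro allI)
      fix p q
      show "H $ p $ q = 0 $ p $ q"
      proof (cases "e p \<le> e q")
        case True then show ?thesis using HP by (simp add: P_def)
      next
        case False then show ?thesis using HP[of q p] Hs[of p q] by (simp add: P_def)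
      qed
    qed
    have "S ** H ** transpose S = (S ** transpose S) ** G ** (S ** transpose S)"
      unfolding H_def by (simp add: matrix_mul_assoc)
    also have "\<dots> = G" by (simp add: SSt)
    finally have "G = 0" using \<open>H = 0\<close> by simp
    then show "g = 0" unfolding G_def by (simp add: vec_eq_iff)
  qed
  show ?thesis using A B by blast
qed

lemma card_P:
  fixes e :: "'n::finite \<Rightarrow> nat"
  assumes e: "bij_betw e (UNIV::'n set) {0..<CARD('n)}" and ev: "even CARD('n)"
  shows "card {(p::'n, q). e p \<le> e q} = (CARD('n) div 2) * (CARD('n) + 1)"
proof -
  define P where "P = {(p::'n, q). e p \<le> e q}"
  define T where "T = {(a::nat, b). a \<le> b \<and> b < CARD('n)}"
  have einj: "inj e" using e bij_betw_imp_inj_on by blast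
  have rng: "range e = {0..<CARD('n)}" using e unfolding bij_betw_def by blast
  have inj2: "inj_on (map_prod e e) P"
  proof (rule inj_onI)
    fix x y assume "map_prod e e x = map_prod e e y"
    then have "e (fst x) = e (fst y)" "e (snd x) = e (snd y)" by (auto simp: map_prod_def case_prod_unfold)
    then have "fst x = fst y" "snd x = snd y" using einj by (auto dest: injD)
    then show "x = y" by (simp add: prod_eq_iff)
  qed
  have img: "map_prod e e ` P = T"
  proof
    show "map_prod e e ` P \<subseteq> T"
    proof
      fix x assume "x \<in> map_prod e e ` P"
      then obtain p q where "x = (e p, e q)" "e p \<le> e q" unfolding P_def by force
      moreover have "e q < CARD('n)" using rng by (metis atLeastLessThan_iff rangeI)
      ultimately show "x \<in> T" unfolding T_def by simp
    qed
    show "T \<subseteq> map_prod e e ` P"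
    proof
      fix x assume "x \<in> T"
      then obtain a b where x: "x = (a, b)" "a \<le> b" "b < CARD('n)" unfolding T_def by blast
      have "a \<in> range e" "b \<in> range e" using x rng by auto
      then obtain p q where pq: "e p = a" "e q = b" by (metis imageE)
      then have "(p, q) \<in> P" unfolding P_def using x by simp
      moreover have "x = map_prod e e (p, q)" using pq x by simp
      ultimately show "x \<in> map_prod e e ` P" by blast
    qed
  qed
  have cPT: "card P = card T" using card_image[OF inj2] img by simp
  obtain m where m: "CARD('n) = 2 * m" using ev by blast
  have "2 * card T = CARD('n) * (CARD('n) + 1)" using card_tri[of "CARD('n)"] unfolding T_def .
  then have "card T = m * (2 * m + 1)" unfolding m by simp
  then show ?thesis using cPT m unfolding P_def by simp
qed

theorem mainTheorem1:
  fixes b :: "real^'n" and t0 :: nat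
  assumes "even CARD('n)"
    and "norm b = 1"
  shows "\<exists>N :: (real^'n^'n) set. N \<in> null_sets lebesgue \<and>
           (\<forall>X. X \<notin> N \<longrightarrow>
              inj_on (alpha_map b t0 X) sym_mats \<and> inj (beta_map b t0 X))"
proof -
  obtain e where e: "bij_betw e (UNIV::'n set) {0..<CARD('n)}"
    using ex_bij_betw_finite_nat[of "UNIV::'n set"] by auto
  have einj: "inj e" using e bij_betw_imp_inj_on by blast
  have elt: "e j < CARD('n)" for j using e unfolding bij_betw_def by auto
  define P where "P = {(p::'n, q). e p \<le> e q}"
  have finP: "finite P" by (rule finite)
  obtain \<iota> where io: "bij_betw \<iota> P {0..<card P}"
    using ex_bij_betw_finite_nat[OF finP] by blast
  have cP: "card P = (CARD('n) div 2) * (CARD('n) + 1)" unfolding P_def by (rule card_P[OF e assms(1)])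
  have io': "\<iota> (j, k) < (CARD('n) div 2) * (CARD('n) + 1)" if "e j \<le> e k" for j k
  proof -
    have "(j, k) \<in> P" using that unfolding P_def by simp
    then have "\<iota> (j, k) \<in> {0..<card P}" using io unfolding bij_betw_def by auto
    then show ?thesis using cP by simp
  qed
  obtain X0 where X0: "det (Bmat b t0 e X0) \<noteq> 0" "det (Amat b t0 e \<iota> X0) \<noteq> 0"
    using witness[OF assms(2) e io[unfolded P_def]] by blast
  define gg where "gg X = det (Bmat b t0 e X) * det (Amat b t0 e \<iota> X)" for X
  have pg: "polyfun gg" unfolding gg_def[abs_def]
    by (intro pf_mult pf_det mpf_Bmat mpf_Amat)
  have g0: "gg X0 \<noteq> 0" using X0 by (simp add: gg_def)
  show ?thesis
  proof (intro exI conjI allI impI)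
    show "{X. gg X = 0} \<in> null_sets lebesgue" by (rule pf_null[OF pg g0])
  next
    fix X assume "X \<notin> {X. gg X = 0}"
    then have d: "det (Bmat b t0 e X) \<noteq> 0" "det (Amat b t0 e \<iota> X) \<noteq> 0" by (auto simp: gg_def)
    show "inj_on (alpha_map b t0 X) sym_mats" by (rule inj_alpha[OF d(2) io'])
    show "inj (beta_map b t0 X)" by (rule inj_beta[OF d(1) elt])
  qed
qed

end
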